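(* Suppose $M$ is a real symmetric $g\times g$ matrix of signature $(g-1,1)$, and $c \in \mathbb{C}^g$ satisfies $\overline{c}^\top M c < 0$. Then $c^\top Mc \neq 0$, and the real symmetric matrix $M+M\operatorname{Re}\left(\left(-\tfrac12 c^\top Mc\right)^{-1}cc^\top\right)M$ is positive definite. *)

theory Defs
  imports "Jordan_Normal_Form.Jordan_Normal_Form" "HOL-Computational_Algebra.Polynomial"
begin

definition pos_inertia :: "real mat \<Rightarrow> nat" where
  "pos_inertia A = (\<Sum>a\<in>{a. a > 0 \<and> poly (char_poly A) a = 0}. order a (char_poly A))"

definition neg_inertia :: "real mat \<Rightarrow> nat" where
  "neg_inertia A = (\<Sum>a\<in>{a. a < 0 \<and> poly (char_poly A) a = 0}. order a (char_poly A))"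

definition has_signature :: "real mat \<Rightarrow> nat \<Rightarrow> nat \<Rightarrow> bool" where
  "has_signature A p q \<longleftrightarrow> pos_inertia A = p \<and> neg_inertia A = q"

definition pos_def_mat :: "real mat \<Rightarrow> bool" where
  "pos_def_mat A \<longleftrightarrow> A \<in> carrier_mat (dim_row A) (dim_row A) \<and>
     (\<forall>x\<in>carrier_vec (dim_row A). x \<noteq> 0\<^sub>v (dim_row A) \<longrightarrow> x \<bullet> (A *\<^sub>v x) > 0)"

end

theory Submission
  imports Defs "Jordan_Normal_Form.Schur_Decomposition"
begin

lemma sym_real_eigenvalue:
  fixes A :: "real mat"
  assumes A: "A \<in> carrier_mat n n" and sym: "transpose_mat A = A" and n: "n > 0"
  shows "\<exists>e. eigenvalue A e"
proof -
  let ?Ac = "map_mat complex_of_real A"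
  have Ac: "?Ac \<in> carrier_mat n n" using A by auto
  obtain as where cp: "char_poly ?Ac = (\<Prod>a\<leftarrow>as. [:- a, 1:])" and len: "length as = n"
    using char_poly_factorized[OF Ac] by blast
  then obtain a where a: "a \<in> set as" using n by (cases as) auto
  have "poly (char_poly ?Ac) a = 0" unfolding cp using a
    by (induction as) (auto simp: poly_prod_list)
  hence "eigenvalue ?Ac a" using eigenvalue_root_char_poly[OF Ac] by simp
  then obtain v where ev: "eigenvector ?Ac v a" unfolding eigenvalue_def by blast
  hence v: "v \<in> carrier_vec n" and v0: "v \<noteq> 0\<^sub>v n" and Av: "?Ac *\<^sub>v v = a \<cdot>\<^sub>v v"
    unfolding eigenvector_def using A by auto
  define s where "s = conjugate v \<bullet> (?Ac *\<^sub>v v)"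
  define t where "t = conjugate v \<bullet> v"
  have st: "s = a * t" unfolding s_def t_def Av using v by simp
  have s_sum: "s = (\<Sum>i<n. \<Sum>j<n. cnj (v $ i) * of_real (A $$ (i,j)) * v $ j)"
    unfolding s_def scalar_prod_def using A v
    by (auto simp: lessThan_atLeast0 row_def sum_distrib_left scalar_prod_def mult.assoc intro!: sum.cong)
  have "cnj s = (\<Sum>i<n. \<Sum>j<n. v $ i * of_real (A $$ (i,j)) * cnj (v $ j))"
    unfolding s_sum by (simp add: sum_conjugate)
  also have "\<dots> = (\<Sum>j<n. \<Sum>i<n. v $ i * of_real (A $$ (i,j)) * cnj (v $ j))"
    by (rule sum.swap)
  also have "\<dots> = s" unfolding s_sum
  proof (intro sum.cong refl)
    fix i j assume "i \<in> {..<n}" "j \<in> {..<n}"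
    hence "A $$ (j,i) = A $$ (i,j)" using sym A
      by (metis carrier_matD index_transpose_mat(1) lessThan_iff)
    thus "v $ j * of_real (A $$ (j, i)) * cnj (v $ i) = cnj (v $ i) * of_real (A $$ (i, j)) * v $ j"
      by simp
  qed
  finally have "cnj s = s" .
  hence "Im s = 0" by (metis Reals_cnj_iff complex_is_Real_iff)
  have t_sum: "t = (\<Sum>i<n. of_real ((cmod (v $ i))^2))"
    unfolding t_def scalar_prod_def using v
    by (auto simp: lessThan_atLeast0 intro!: sum.cong) (metis complex_norm_square mult.commute of_real_power)
  obtain i where i: "i < n" "v $ i \<noteq> 0" using v v0 by (metis carrier_vecD eq_vecI index_zero_vec(1) index_zero_vec(2))
  have "Re t > 0" unfolding t_sum Re_sum
  proof (rule sum_pos2[of _ i])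
    show "0 < Re (complex_of_real ((cmod (v $ i))\<^sup>2))" using i by simp
  qed (use i in auto)
  have "Im t = 0" unfolding t_sum Im_sum by simp
  have "Im a = 0"
    using st \<open>Im s = 0\<close> \<open>Im t = 0\<close> \<open>Re t > 0\<close> by (simp add: complex_eq_iff)
  hence aR: "a = of_real (Re a)" by (simp add: complex_eq_iff)
  have "of_real (poly (char_poly A) (Re a)) = poly (char_poly ?Ac) a"
    by (subst aR, simp add: of_real_hom.char_poly_hom[OF A] of_real_hom.poly_map_poly)
  also have "\<dots> = 0" by fact
  finally have "poly (char_poly A) (Re a) = 0" by simp
  thus ?thesis using eigenvalue_root_char_poly[OF A] by blast
qed

lemma inv_sqrt_sq: "(x::real) > 0 \<Longrightarrow> 1 / sqrt x * (1 / sqrt x * x) = 1"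
proof -
  assume x: "x > 0"
  have "sqrt x * sqrt x = x" using x by simp
  moreover have "sqrt x > 0" using x by simp
  ultimately show ?thesis by (metis divide_self_if less_irrefl mult.commute nonzero_mult_div_cancel_left times_divide_eq_left times_divide_times_eq mult_1)
qed

lemma assoc4: fixes a :: "'a::comm_ring_1 mat"
  assumes "a \<in> carrier_mat n n" "b \<in> carrier_mat n n" "d \<in> carrier_mat n n" "e \<in> carrier_mat n n"
  shows "a * b * (d * e) = a * (b * d) * e"
proof -
  have "a * b * (d * e) = a * (b * (d * e))" using assoc_mult_mat[of a n n b n "d * e" n] assms by auto
  also have "b * (d * e) = (b * d) * e" using assoc_mult_mat[of b n n d n e n] assms by auto
  also have "a * (b * d * e) = a * (b * d) * e" using assoc_mult_mat[of a n n "b * d" n e n] assms by auto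
  finally show ?thesis .
qed
lemma assoc5: fixes a :: "'a::comm_ring_1 mat"
  assumes "a \<in> carrier_mat n n" "b \<in> carrier_mat n n" "c \<in> carrier_mat n n" "d \<in> carrier_mat n n" "e \<in> carrier_mat n n"
  shows "a * b * c * (d * e) = a * (b * c * d) * e"
proof -
  have "a * b * c = a * (b * c)" using assoc_mult_mat[of a n n b n c n] assms by auto
  hence "a * b * c * (d * e) = a * (b * c) * (d * e)" by simp
  also have "\<dots> = a * (b * c * d) * e" using assoc4[of a n "b * c" d e] assms by auto
  finally show ?thesis .
qed
lemma real_conj_vec[simp]: "conjugate (w :: real vec) = w"
  by (rule eq_vecI) (auto simp: conjugate_vec_def)

lemma real_vec_sq_pos: fixes v :: "real vec"
  assumes "v \<in> carrier_vec n" "v \<noteq> 0\<^sub>v n" shows "v \<bullet> v > 0"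
  using conjugate_square_greater_0_vec[of v] assms by simp

lemma spectral:
  fixes A :: "real mat"
  assumes "A \<in> carrier_mat n n" "transpose_mat A = A"
  shows "\<exists>P d. P \<in> carrier_mat n n \<and> transpose_mat P * P = 1\<^sub>m n \<and>
     transpose_mat P * A * P = mat n n (\<lambda>(i,j). if i = j then d i else 0)"
  using assms
proof (induction n arbitrary: A)
  case 0
  show ?case
  proof (intro exI[of _ "1\<^sub>m 0"] exI[of _ "\<lambda>_. 0::real"] conjI)
    show "transpose_mat (1\<^sub>m 0) * A * 1\<^sub>m 0 = mat 0 0 (\<lambda>(i,j). if i = j then (\<lambda>_. 0::real) i else 0)"
      by (rule eq_matI) (use 0 in auto)
  qed auto
next
  case (Suc m A)
  define n where "n = Suc m"
  have A: "A \<in> carrier_mat n n" and sym: "transpose_mat A = A" using Suc n_def by auto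
  obtain e where e: "eigenvalue A e" using sym_real_eigenvalue[OF A sym] n_def by auto
  define v0 where "v0 = find_eigenvector A e"
  have ev0: "eigenvector A v0 e" using find_eigenvector[OF A e] v0_def by simp
  hence v0: "v0 \<in> carrier_vec n" "v0 \<noteq> 0\<^sub>v n" "A *\<^sub>v v0 = e \<cdot>\<^sub>v v0"
    unfolding eigenvector_def using A by auto
  define v where "v = (1 / sqrt (v0 \<bullet> v0)) \<cdot>\<^sub>v v0"
  have pos: "v0 \<bullet> v0 > 0" using real_vec_sq_pos v0 by blast
  have v: "v \<in> carrier_vec n" unfolding v_def using v0 by simp
  have vv: "v \<bullet> v = 1" unfolding v_def using v0 pos
    by (simp add: smult_scalar_prod_distrib scalar_prod_smult_distrib inv_sqrt_sq)
  have vnz: "v \<noteq> 0\<^sub>v n" using vv v by auto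
  have Av: "A *\<^sub>v v = e \<cdot>\<^sub>v v" unfolding v_def using v0 A
    by (simp add: mult_mat_vec smult_smult_assoc mult.commute)
  interpret cof_vec_space n "TYPE(real)" .
  define b where "b = basis_completion v"
  from basis_completion[OF v vnz, folded b_def]
  have dist_b: "distinct b" and indep: "\<not> lin_dep (set b)" and bc: "set b \<subseteq> carrier_vec n"
    and hdb: "hd b = v" and len_b: "length b = n" by auto
  from hdb len_b n_def obtain vs where bv: "b = v # vs" by (cases b, auto)
  define ws where "ws = gram_schmidt n b"
  from gram_schmidt_result[OF bc dist_b indep ws_def]
  have ws: "set ws \<subseteq> carrier_vec n" "corthogonal ws" "length ws = n" by (auto simp: len_b)
  have hdws: "hd ws = v" unfolding ws_def bv using v by simp
  define us where "us = map (\<lambda>w. (1 / sqrt (w \<bullet> w)) \<cdot>\<^sub>v w) ws"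
  have us_len: "length us = n" unfolding us_def using ws by simp
  have us_c: "\<And>i. i < n \<Longrightarrow> us ! i \<in> carrier_vec n" unfolding us_def using ws by auto
  have us_orth: "\<And>i j. i < n \<Longrightarrow> j < n \<Longrightarrow> us ! i \<bullet> us ! j = (if i = j then 1 else 0)"
  proof -
    fix i j assume i: "i < n" and j: "j < n"
    have wi: "ws ! i \<in> carrier_vec n" "ws ! j \<in> carrier_vec n" using ws i j by auto
    have o: "ws ! i \<bullet> ws ! j = 0 \<longleftrightarrow> i \<noteq> j" using corthogonalD[OF ws(2), of i j] i j ws by simp
    have pi: "ws ! i \<bullet> ws ! i > 0" using o[of] corthogonalD[OF ws(2), of i i] i ws wi
      by (metis conjugate_square_ge_0_vec less_eq_real_def real_conj_vec)
    have pj: "ws ! j \<bullet> ws ! j > 0" using corthogonalD[OF ws(2), of j j] j ws wi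
      by (metis conjugate_square_ge_0_vec less_eq_real_def real_conj_vec)
    have "us ! i \<bullet> us ! j = (1 / sqrt (ws ! i \<bullet> ws ! i)) * (1 / sqrt (ws ! j \<bullet> ws ! j)) * (ws ! i \<bullet> ws ! j)"
      unfolding us_def using i j ws wi by (simp add: smult_scalar_prod_distrib scalar_prod_smult_distrib)
    also have "\<dots> = (if i = j then 1 else 0)"
    proof (cases "i = j")
      case True
      then show ?thesis using pi
        by simp
    qed (use o in auto)
    finally show "us ! i \<bullet> us ! j = (if i = j then 1 else 0)" .
  qed
  have us0: "us ! 0 = v"
  proof -
    have "ws ! 0 = v" using hdws ws n_def by (metis hd_conv_nth list.size(3) nat.distinct(1))
    thus ?thesis unfolding us_def using ws n_def vv by simp
  qed
  define W where "W = mat_of_cols n us"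
  have W: "W \<in> carrier_mat n n" unfolding W_def using us_len by (metis mat_of_cols_carrier(1))
  have colW: "\<And>j. j < n \<Longrightarrow> col W j = us ! j" unfolding W_def using us_len us_c by simp
  have WW: "transpose_mat W * W = 1\<^sub>m n"
    by (rule eq_matI) (use W colW us_orth in auto)
  define A' where "A' = transpose_mat W * A * W"
  have A': "A' \<in> carrier_mat n n" unfolding A'_def using W A by auto
  have symA': "transpose_mat A' = A'"
  proof -
    have A'_alt: "A' = transpose_mat W * (A * W)" unfolding A'_def using W A by simp
    have t1: "transpose_mat (transpose_mat W * (A * W)) = transpose_mat (A * W) * W"
      using transpose_mult[of "transpose_mat W" n n "A * W" n] W A by simp
    have t2: "transpose_mat (A * W) = transpose_mat W * A"
      using transpose_mult[of A n n W n] W A sym by simp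
    show ?thesis unfolding A'_alt t1 t2 using W A by simp
  qed
  have A'col: "\<And>i. i < n \<Longrightarrow> A' $$ (i, 0) = (if i = 0 then e else 0)"
  proof -
    fix i assume i: "i < n"
    have "A' $$ (i, 0) = (transpose_mat W * (A * W)) $$ (i, 0)" unfolding A'_def using W A by simp
    also have "\<dots> = col W i \<bullet> (A *\<^sub>v col W 0)" using W A i n_def by (simp add: mult_mat_vec_def)
    also have "\<dots> = us ! i \<bullet> (e \<cdot>\<^sub>v v)" using colW i n_def us0 Av by simp
    also have "\<dots> = e * (us ! i \<bullet> us ! 0)" using us0 us_c i v by simp
    also have "\<dots> = (if i = 0 then e else 0)" using us_orth i n_def by simp
    finally show "A' $$ (i, 0) = (if i = 0 then e else 0)" .
  qed
  define A3 where "A3 = mat m m (\<lambda>(i,j). A' $$ (i+1, j+1))"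
  have A3: "A3 \<in> carrier_mat m m" unfolding A3_def by simp
  have symA3: "transpose_mat A3 = A3" unfolding A3_def
    by (rule eq_matI) (use symA' A' n_def in \<open>auto, metis carrier_matD index_transpose_mat(1) Suc_mono\<close>)
  have A'b: "A' = four_block_mat (mat 1 1 (\<lambda>_. e)) (0\<^sub>m 1 m) (0\<^sub>m m 1) A3"
  proof (rule eq_matI)
    fix i j assume i: "i < dim_row (four_block_mat (mat 1 1 (\<lambda>_. e)) (0\<^sub>m 1 m) (0\<^sub>m m 1) A3)"
      and j: "j < dim_col (four_block_mat (mat 1 1 (\<lambda>_. e)) (0\<^sub>m 1 m) (0\<^sub>m m 1) A3)"
    hence i': "i < n" and j': "j < n" using A3 n_def by auto
    have r0: "A' $$ (0, j) = (if j = 0 then e else 0)"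
      using A'col[OF j'] symA' A' j' n_def by (metis carrier_matD index_transpose_mat(1) zero_less_Suc)
    show "A' $$ (i, j) = four_block_mat (mat 1 1 (\<lambda>_. e)) (0\<^sub>m 1 m) (0\<^sub>m m 1) A3 $$ (i, j)"
      using i' j' A3 A'col r0 n_def unfolding A3_def by (auto simp: index_mat_four_block)
  qed (use A' A3 n_def in auto)
  obtain P3 d3 where P3: "P3 \<in> carrier_mat m m" and P3P3: "transpose_mat P3 * P3 = 1\<^sub>m m"
    and D3: "transpose_mat P3 * A3 * P3 = mat m m (\<lambda>(i,j). if i = j then d3 i else 0)"
    using Suc.IH[OF A3 symA3] by blast
  define F where "F = four_block_mat (1\<^sub>m 1) (0\<^sub>m 1 m) (0\<^sub>m m 1) P3"
  have F: "F \<in> carrier_mat n n" unfolding F_def n_def using P3 by auto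
  have FT: "transpose_mat F = four_block_mat (1\<^sub>m 1) (0\<^sub>m 1 m) (0\<^sub>m m 1) (transpose_mat P3)"
    unfolding F_def using P3
    by (subst transpose_four_block_mat[of _ 1 1 _ m _ m], auto)
  have WT: "transpose_mat W \<in> carrier_mat n n" and FTc: "transpose_mat F \<in> carrier_mat n n"
    using W F by auto
  define P where "P = W * F"
  have P: "P \<in> carrier_mat n n" unfolding P_def using W F by auto
  have PT: "transpose_mat P = transpose_mat F * transpose_mat W" unfolding P_def using W F
    by (simp add: transpose_mult)
  have "transpose_mat P * P = transpose_mat F * (transpose_mat W * W) * F"
    unfolding PT unfolding P_def using assoc4[OF FTc WT W F] .
  also have "\<dots> = transpose_mat F * F" using WW F by simp
  also have "\<dots> = 1\<^sub>m n" unfolding FT unfolding F_def using P3 P3P3 n_def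
    by (simp add: mult_four_block_mat[of _ 1 1 _ m _ m _ _ 1 _ m])
  finally have PP: "transpose_mat P * P = 1\<^sub>m n" .
  define d where "d = (\<lambda>i. if i = 0 then e else d3 (i - 1))"
  have "transpose_mat P * A * P = transpose_mat F * A' * F"
    unfolding PT unfolding P_def A'_def using assoc5[OF FTc WT A W F] .
  also have "\<dots> = four_block_mat (mat 1 1 (\<lambda>_. e)) (0\<^sub>m 1 m) (0\<^sub>m m 1) (transpose_mat P3 * A3 * P3)"
    unfolding FT A'b unfolding F_def using P3 A3
    by (simp add: mult_four_block_mat[of _ 1 1 _ m _ m _ _ 1 _ m])
  also have "\<dots> = mat n n (\<lambda>(i,j). if i = j then d i else 0)"
    unfolding D3 d_def n_def by (rule eq_matI) (auto simp: index_mat_four_block)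
  finally show ?case using P PP unfolding n_def by blast
qed

definition bf :: "nat \<Rightarrow> (nat \<Rightarrow> real) \<Rightarrow> (nat \<Rightarrow> real) \<Rightarrow> (nat \<Rightarrow> real) \<Rightarrow> real" where
  "bf g d F G = (\<Sum>i<g. d i * F i * G i)"

lemma bf_sym: "bf g d F G = bf g d G F"
  unfolding bf_def by (simp add: mult.commute mult.left_commute)

lemma bf_lin: "bf g d (\<lambda>i. a * F i + b * G i) H = a * bf g d F H + b * bf g d G H"
  unfolding bf_def by (simp add: sum.distrib sum_distrib_left algebra_simps)

lemma bf_lin2: "bf g d H (\<lambda>i. a * F i + b * G i) = a * bf g d H F + b * bf g d H G"
  using bf_lin[of g d a F b G H] bf_sym by metis

lemma bf_nonneg_off:
  assumes "k < g" "\<forall>i<g. i \<noteq> k \<longrightarrow> d i > 0" "T k = 0"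
  shows "bf g d T T \<ge> 0"
  unfolding bf_def
proof (intro sum_nonneg)
  fix i assume i: "i \<in> {..<g}"
  show "0 \<le> d i * T i * T i"
  proof (cases "i = k")
    case False
    hence "d i > 0" using assms i by auto
    thus ?thesis by (simp add: mult.assoc)
  qed (use assms in simp)
qed

lemma bf_zero_off:
  assumes "k < g" "\<forall>i<g. i \<noteq> k \<longrightarrow> d i > 0" "T k = 0" "bf g d T T = 0"
  shows "\<forall>i<g. T i = 0"
proof (intro allI impI)
  fix i assume i: "i < g"
  have nn: "\<forall>j\<in>{..<g}. d j * T j * T j \<ge> 0"
  proof
    fix j assume j: "j \<in> {..<g}"
    show "0 \<le> d j * T j * T j"
    proof (cases "j = k")
      case False
      hence "d j > 0" using assms j by auto
      thus ?thesis by (simp add: mult.assoc)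
    qed (use assms in simp)
  qed
  have "\<forall>j\<in>{..<g}. d j * T j * T j = 0"
    using sum_nonneg_eq_0_iff[of "{..<g}" "\<lambda>j. d j * T j * T j"] nn assms(4) unfolding bf_def by auto
  hence "d i * T i * T i = 0" using i by auto
  thus "T i = 0" using assms i by (cases "i = k") auto
qed

lemma diag_L1:
  assumes k: "k < g" "d k < 0" "\<forall>i<g. i \<noteq> k \<longrightarrow> d i > 0"
    and Y: "bf g d Y Y < 0" and UY: "bf g d U Y = 0" and U: "\<exists>i<g. U i \<noteq> 0"
  shows "bf g d U U > 0"
proof (rule ccontr)
  assume "\<not> bf g d U U > 0"
  hence UU: "bf g d U U \<le> 0" by simp
  define T where "T = (\<lambda>i. Y k * U i + (- U k) * Y i)"
  have Tk: "T k = 0" unfolding T_def by simp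
  have TT: "bf g d T T = Y k * Y k * bf g d U U + U k * U k * bf g d Y Y"
    unfolding T_def bf_lin bf_lin2 using UY bf_sym[of g d U Y] by (simp add: algebra_simps)
  have T0: "bf g d T T \<ge> 0" using bf_nonneg_off[of k g d T, OF k(1) k(3) Tk] .
  have a1: "Y k * Y k * bf g d U U \<le> 0" using UU by (simp add: mult_nonneg_nonpos)
  have a2: "U k * U k * bf g d Y Y \<le> 0" using Y by (simp add: mult_nonneg_nonpos)
  have "bf g d T T = 0" using TT T0 a1 a2 by linarith
  hence Tz: "\<forall>i<g. T i = 0" using bf_zero_off[of k g d T, OF k(1) k(3) Tk] by blast
  have "U k * U k * bf g d Y Y = 0" using TT T0 a1 a2 by linarith
  hence Uk: "U k = 0" using Y by simp
  have Yk: "Y k \<noteq> 0"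
  proof
    assume "Y k = 0"
    hence "bf g d Y Y \<ge> 0" using bf_nonneg_off[of k g d Y, OF k(1) k(3)] by blast
    thus False using Y by simp
  qed
  have "\<forall>i<g. U i = 0" using Tz Uk Yk unfolding T_def by simp
  thus False using U by blast
qed

lemma bf_zero_fun: "bf g d (\<lambda>i. 0) G = 0" unfolding bf_def by simp

lemma bf_cong: "(\<forall>i<g. F i = F' i) \<Longrightarrow> bf g d F G = bf g d F' G"
  unfolding bf_def by (intro sum.cong) auto

lemma real_core:
  assumes k: "k < g" "d k < 0" "\<forall>i<g. i \<noteq> k \<longrightarrow> d i > 0"
    and XY: "bf g d X Y = 0" and pq: "bf g d X X - bf g d Y Y > 0"
    and ppq: "bf g d X X + bf g d Y Y < 0" and V: "\<exists>i<g. V i \<noteq> 0"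
  shows "bf g d V V - 2 * ((bf g d V X)^2 - (bf g d V Y)^2) / (bf g d X X - bf g d Y Y) > 0"
proof -
  define p where "p = bf g d X X"
  define q where "q = bf g d Y Y"
  have q: "q < 0" using pq ppq unfolding p_def q_def by linarith
  have L: "\<And>W. bf g d W Y = 0 \<Longrightarrow> \<exists>i<g. W i \<noteq> 0 \<Longrightarrow> bf g d W W > 0"
    using diag_L1[OF k] q unfolding q_def by blast
  have L': "\<And>W. bf g d W Y = 0 \<Longrightarrow> bf g d W W \<ge> 0"
  proof -
    fix W assume W: "bf g d W Y = 0"
    show "bf g d W W \<ge> 0"
    proof (cases "\<exists>i<g. W i \<noteq> 0")
      case True thus ?thesis using L[OF W] by simp
    next
      case False
      hence "bf g d W W = bf g d (\<lambda>i. 0) W" by (intro bf_cong) auto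
      thus ?thesis by (simp add: bf_zero_fun)
    qed
  qed
  define t where "t = bf g d V Y / q"
  define U where "U = (\<lambda>i. 1 * V i + (- t) * Y i)"
  have UY: "bf g d U Y = 0" unfolding U_def bf_lin t_def using q unfolding q_def by simp
  have Vdef: "V = (\<lambda>i. 1 * U i + t * Y i)" unfolding U_def by auto
  have VV: "bf g d V V = t^2 * q + bf g d U U"
    unfolding Vdef bf_lin bf_lin2 using UY bf_sym[of g d U Y] unfolding q_def
    by (simp add: power2_eq_square algebra_simps)
  have VX: "bf g d V X = bf g d U X"
    unfolding Vdef bf_lin using XY bf_sym[of g d X Y] by simp
  have VY: "bf g d V Y = t * q"
    unfolding Vdef bf_lin using UY unfolding q_def by simp
  have UU: "bf g d U U \<ge> 0" using L'[OF UY] .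
  have p0: "p \<ge> 0" using L'[OF XY] unfolding p_def .
  define r where "r = bf g d U X"
  have CS: "r^2 \<le> p * bf g d U U"
  proof (cases "p = 0")
    case True
    have "\<not> (\<exists>i<g. X i \<noteq> 0)" using L[OF XY] True unfolding p_def by auto
    hence "bf g d U X = bf g d U (\<lambda>i. 0)" unfolding bf_def by (intro sum.cong) auto
    hence "r = 0" unfolding r_def by (simp add: bf_def)
    thus ?thesis using True by simp
  next
    case False
    hence pp: "p > 0" using p0 by simp
    define W where "W = (\<lambda>i. p * U i + (- r) * X i)"
    have WY: "bf g d W Y = 0" unfolding W_def bf_lin using UY XY by simp
    have "bf g d W W = p * (p * bf g d U U - r^2)"
      unfolding W_def bf_lin bf_lin2 using bf_sym[of g d X U] unfolding r_def p_def
      by (simp add: power2_eq_square algebra_simps)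
    hence "p * (p * bf g d U U - r^2) \<ge> 0" using L'[OF WY] by simp
    hence "p * bf g d U U - r^2 \<ge> 0" using pp by (simp add: zero_le_mult_iff)
    thus ?thesis by simp
  qed
  define D where "D = p - q"
  have D: "D > 0" using pq unfolding D_def p_def q_def .
  define E where "E = bf g d V V - 2 * ((bf g d V X)^2 - (bf g d V Y)^2) / D"
  have ED: "E * D = t^2 * q * (p + q) + bf g d U U * D - 2 * r^2"
    unfolding E_def VV VX VY r_def[symmetric] using D unfolding D_def
    by (simp add: field_simps power2_eq_square)
  have ineq: "bf g d U U * D - 2 * r^2 \<ge> - bf g d U U * (p + q)"
    using CS unfolding D_def by (simp add: algebra_simps)
  have "E * D > 0"
  proof (cases "t = 0")
    case True
    hence "\<forall>i<g. U i = V i" unfolding U_def by simp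
    hence "bf g d U Y = bf g d V Y" by (intro bf_cong)
    hence "bf g d U U > 0" using L UY V True unfolding U_def by simp
    moreover have "p + q < 0" using ppq unfolding p_def q_def .
    ultimately have "- bf g d U U * (p + q) > 0" by (simp add: mult_pos_neg)
    thus ?thesis using ED ineq True by simp
  next
    case False
    have "t^2 > 0" using False by simp
    moreover have "q * (p + q) > 0" using q ppq unfolding p_def q_def by (simp add: mult_neg_neg)
    ultimately have "t^2 * q * (p + q) > 0" by (simp add: mult.assoc)
    moreover have "- bf g d U U * (p + q) \<ge> 0" using UU ppq unfolding p_def q_def
      by (simp add: mult_nonneg_nonpos)
    ultimately show ?thesis using ED ineq by linarith
  qed
  hence "E > 0" using D by (simp add: zero_less_mult_iff)
  thus ?thesis unfolding E_def D_def p_def q_def .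
qed

lemma lam_parts: "(\<Sum>i<g. of_real (d i) * (Z i)^2) =
   Complex (bf g d (\<lambda>i. Re (Z i)) (\<lambda>i. Re (Z i)) - bf g d (\<lambda>i. Im (Z i)) (\<lambda>i. Im (Z i)))
           (2 * bf g d (\<lambda>i. Re (Z i)) (\<lambda>i. Im (Z i)))"
  unfolding bf_def by (simp add: complex_eq_iff Re_sum Im_sum power2_eq_square sum_subtractf sum_distrib_left algebra_simps)

lemma norm_parts: "(\<Sum>i<g. d i * (cmod (Z i))^2) =
   bf g d (\<lambda>i. Re (Z i)) (\<lambda>i. Re (Z i)) + bf g d (\<lambda>i. Im (Z i)) (\<lambda>i. Im (Z i))"
  unfolding bf_def cmod_power2 by (simp add: sum.distrib algebra_simps power2_eq_square)

lemma s_parts: "(\<Sum>i<g. of_real (d i) * Z i * of_real (V i)) =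
   Complex (bf g d V (\<lambda>i. Re (Z i))) (bf g d V (\<lambda>i. Im (Z i)))"
  unfolding bf_def by (simp add: complex_eq_iff Re_sum Im_sum algebra_simps)

lemma complex_core:
  assumes k: "k < g" "d k < 0" "\<forall>i<g. i \<noteq> k \<longrightarrow> d i > 0"
    and neg: "(\<Sum>i<g. d i * (cmod (Z i))^2) < 0"
  shows "(\<Sum>i<g. of_real (d i) * (Z i)^2) \<noteq> 0"
    and "(\<exists>i<g. V i \<noteq> 0) \<Longrightarrow> bf g d V V + Re (-2 / (\<Sum>i<g. of_real (d i) * (Z i)^2) *
           (\<Sum>i<g. of_real (d i) * Z i * of_real (V i))^2) > 0"
proof -
  define lam where "lam = (\<Sum>i<g. of_real (d i) * (Z i)^2)"
  show lam0: "(\<Sum>i<g. of_real (d i) * (Z i)^2) \<noteq> 0"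
  proof
    assume "(\<Sum>i<g. of_real (d i) * (Z i)^2) = 0"
    hence e: "bf g d (\<lambda>i. Re (Z i)) (\<lambda>i. Re (Z i)) = bf g d (\<lambda>i. Im (Z i)) (\<lambda>i. Im (Z i))"
       "bf g d (\<lambda>i. Re (Z i)) (\<lambda>i. Im (Z i)) = 0"
      unfolding lam_parts by (auto simp: complex_eq_iff)
    have n: "bf g d (\<lambda>i. Re (Z i)) (\<lambda>i. Re (Z i)) + bf g d (\<lambda>i. Im (Z i)) (\<lambda>i. Im (Z i)) < 0"
      using neg unfolding norm_parts .
    have YY: "bf g d (\<lambda>i. Im (Z i)) (\<lambda>i. Im (Z i)) < 0" using e n by linarith
    have XX: "bf g d (\<lambda>i. Re (Z i)) (\<lambda>i. Re (Z i)) < 0" using e n by linarith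
    have "\<exists>i<g. Re (Z i) \<noteq> 0"
    proof (rule ccontr)
      assume "\<not> (\<exists>i<g. Re (Z i) \<noteq> 0)"
      hence "bf g d (\<lambda>i. Re (Z i)) (\<lambda>i. Re (Z i)) = 0" unfolding bf_def by (intro sum.neutral) auto
      thus False using XX by simp
    qed
    hence "bf g d (\<lambda>i. Re (Z i)) (\<lambda>i. Re (Z i)) > 0" using diag_L1[OF k YY e(2)] by blast
    thus False using XX by simp
  qed
  hence lam0': "lam \<noteq> 0" unfolding lam_def .
  assume V: "\<exists>i<g. V i \<noteq> 0"
  define w where "w = csqrt (cnj lam / of_real (cmod lam))"
  have cl: "cmod lam > 0" using lam0' by simp
  have w2: "w^2 = cnj lam / of_real (cmod lam)" unfolding w_def by simp
  have ll: "lam * cnj lam = of_real (cmod lam) * of_real (cmod lam)"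
    by (metis complex_norm_square of_real_mult power2_eq_square)
  have w2lam: "w^2 * lam = of_real (cmod lam)"
    unfolding w2 using cl ll by (simp add: field_simps power2_eq_square)
  have cw2: "cmod w ^ 2 = 1"
  proof -
    have "cmod w ^ 2 = cmod (w^2)" by (simp add: norm_power)
    also have "\<dots> = 1" unfolding w2 using cl by (simp add: norm_divide)
    finally show ?thesis .
  qed
  have w0: "w \<noteq> 0" using cw2 by auto
  define Z' where "Z' = (\<lambda>i. w * Z i)"
  define X where "X = (\<lambda>i. Re (Z' i))"
  define Y where "Y = (\<lambda>i. Im (Z' i))"
  have lam': "(\<Sum>i<g. of_real (d i) * (Z' i)^2) = w^2 * lam"
    unfolding Z'_def lam_def by (simp add: sum_distrib_left power_mult_distrib algebra_simps)
  have p1: "bf g d X X - bf g d Y Y = cmod lam" and p2: "bf g d X Y = 0"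
    using lam' unfolding w2lam lam_parts X_def Y_def by (auto simp: complex_eq_iff)
  have nrm': "(\<Sum>i<g. d i * (cmod (Z' i))^2) = (\<Sum>i<g. d i * (cmod (Z i))^2)"
    unfolding Z'_def by (simp add: norm_mult power_mult_distrib cw2)
  have "(\<Sum>i<g. d i * (cmod (Z' i))^2) < 0" using neg nrm' by simp
  hence p3: "bf g d X X + bf g d Y Y < 0" unfolding norm_parts X_def Y_def .
  define s where "s = (\<Sum>i<g. of_real (d i) * Z i * of_real (V i))"
  have s': "(\<Sum>i<g. of_real (d i) * Z' i * of_real (V i)) = w * s"
    unfolding Z'_def s_def by (simp add: sum_distrib_left algebra_simps)
  have sp: "w * s = Complex (bf g d V X) (bf g d V Y)" unfolding s'[symmetric] s_parts X_def Y_def ..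
  have "-2 / lam * s^2 = -2 / (w^2 * lam) * (w * s)^2"
    using w0 lam0' by (simp add: field_simps power2_eq_square)
  also have "\<dots> = -2 / of_real (cmod lam) * (Complex (bf g d V X) (bf g d V Y))^2"
    unfolding w2lam sp ..
  finally have "Re (-2 / lam * s^2) = - (2 * ((bf g d V X)^2 - (bf g d V Y)^2) / (bf g d X X - bf g d Y Y))"
    unfolding p1 by (simp add: power2_eq_square Re_divide)
  moreover have "bf g d V V - 2 * ((bf g d V X)^2 - (bf g d V Y)^2) / (bf g d X X - bf g d Y Y) > 0"
    using real_core[OF k p2 _ p3 V] p1 cl by simp
  ultimately show "bf g d V V + Re (-2 / (\<Sum>i<g. of_real (d i) * (Z i)^2) *
           (\<Sum>i<g. of_real (d i) * Z i * of_real (V i))^2) > 0"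
    unfolding lam_def[symmetric] s_def[symmetric] by linarith
qed


lemma form_diag:
  fixes a b :: "'a::{real_algebra_1,comm_ring_1} vec"
  assumes M: "M \<in> carrier_mat g g"
    and Mij: "\<forall>i<g. \<forall>j<g. M $$ (i,j) = (\<Sum>l<g. P $$ (i,l) * d l * P $$ (j,l))"
    and a: "a \<in> carrier_vec g" and b: "b \<in> carrier_vec g"
  shows "a \<bullet> (map_mat of_real M *\<^sub>v b) = (\<Sum>l<g. of_real (d l) * (\<Sum>i<g. a $ i * of_real (P $$ (i,l))) * (\<Sum>j<g. b $ j * of_real (P $$ (j,l))))"
proof -
  have "a \<bullet> (map_mat of_real M *\<^sub>v b) = (\<Sum>i<g. a $ i * (\<Sum>j<g. of_real (M $$ (i,j)) * b $ j))"
    unfolding scalar_prod_def using M a b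
    by (auto simp: lessThan_atLeast0 row_def scalar_prod_def intro!: sum.cong)
  also have "\<dots> = (\<Sum>i<g. \<Sum>j<g. \<Sum>l<g. a $ i * of_real (P $$ (i,l)) * of_real (d l) * of_real (P $$ (j,l)) * b $ j)"
    using Mij by (auto simp: sum_distrib_left sum_distrib_right of_real_sum mult.assoc intro!: sum.cong)
  also have "\<dots> = (\<Sum>i<g. \<Sum>l<g. \<Sum>j<g. a $ i * of_real (P $$ (i,l)) * of_real (d l) * of_real (P $$ (j,l)) * b $ j)"
    by (intro sum.cong refl sum.swap)
  also have "\<dots> = (\<Sum>l<g. \<Sum>i<g. \<Sum>j<g. a $ i * of_real (P $$ (i,l)) * of_real (d l) * of_real (P $$ (j,l)) * b $ j)"
    by (rule sum.swap)
  also have "\<dots> = (\<Sum>l<g. of_real (d l) * (\<Sum>i<g. a $ i * of_real (P $$ (i,l))) * (\<Sum>j<g. b $ j * of_real (P $$ (j,l))))"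
    by (auto simp: sum_distrib_left sum_distrib_right algebra_simps intro!: sum.cong)
  finally show ?thesis .
qed


lemma order_lin: "Polynomial.order a [:- (b::real), 1:] = (if a = b then 1 else 0)"
proof (cases "a = b")
  case True
  then show ?thesis using order_power_n_n[of a 1] by simp
next
  case False
  then show ?thesis by (simp add: order_0I)
qed

lemma order_prod_lin: "finite I \<Longrightarrow> Polynomial.order a (\<Prod>l\<in>I. [:- (d l :: real), 1:]) = card {l\<in>I. d l = a}"
proof (induction I rule: finite_induct)
  case empty
  then show ?case by (simp add: order_0I)
next
  case (insert x F)
  have nz: "(\<Prod>l\<in>insert x F. [:- d l, 1:]) \<noteq> 0" by (subst prod_zero_iff) (use insert in auto)
  have "Polynomial.order a (\<Prod>l\<in>insert x F. [:- d l, 1:]) = Polynomial.order a ([:- d x, 1:] * (\<Prod>l\<in>F. [:- d l, 1:]))"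
    using insert by simp
  also have "\<dots> = Polynomial.order a [:- d x, 1:] + Polynomial.order a (\<Prod>l\<in>F. [:- d l, 1:])"
    using nz insert by (intro order_mult) simp
  also have "\<dots> = card {l\<in>insert x F. d l = a}"
  proof (cases "d x = a")
    case True
    hence "{l\<in>insert x F. d l = a} = insert x {l\<in>F. d l = a}" by auto
    thus ?thesis unfolding order_lin insert.IH using insert True by simp
  next
    case False
    hence "{l\<in>insert x F. d l = a} = {l\<in>F. d l = a}" by auto
    thus ?thesis unfolding order_lin insert.IH using insert False by simp
  qed
  finally show ?case .
qed

lemma inertia_count:
  fixes M :: "real mat" and d :: "nat \<Rightarrow> real" and g :: nat
  assumes cp: "char_poly M = (\<Prod>l\<in>{0..<g}. [:- d l, 1:])"
  shows "pos_inertia M = card {l\<in>{0..<g}. d l > 0}" and "neg_inertia M = card {l\<in>{0..<g}. d l < 0}"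
proof -
  have root: "\<And>a. poly (char_poly M) a = 0 \<longleftrightarrow> (\<exists>l\<in>{0..<g}. d l = a)"
    unfolding cp poly_prod by (subst prod_zero_iff) auto
  have gen: "(\<Sum>a\<in>{a. Q a \<and> poly (char_poly M) a = 0}. Polynomial.order a (char_poly M)) = card {l\<in>{0..<g}. Q (d l)}" for Q
  proof -
    define S where "S = {l\<in>{0..<g}. Q (d l)}"
    have R: "{a. Q a \<and> poly (char_poly M) a = 0} = d ` S" unfolding S_def root by auto
    have "(\<Sum>a\<in>d ` S. Polynomial.order a (char_poly M)) = (\<Sum>a\<in>d ` S. card {l\<in>S. d l = a})"
    proof (intro sum.cong refl)
      fix a assume "a \<in> d ` S"
      hence "Q a" unfolding S_def by auto
      hence "{l\<in>{0..<g}. d l = a} = {l\<in>S. d l = a}" unfolding S_def by auto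
      thus "Polynomial.order a (char_poly M) = card {l\<in>S. d l = a}" unfolding cp by (simp add: order_prod_lin)
    qed
    also have "\<dots> = card S"
    proof -
      have "card S = (\<Sum>a\<in>d ` S. \<Sum>l\<in>{l\<in>S. d l = a}. 1)"
        using sum.image_gen[of S "\<lambda>_. 1::nat" d] unfolding S_def by simp
      thus ?thesis by simp
    qed
    finally show ?thesis unfolding R S_def .
  qed
  show "pos_inertia M = card {l\<in>{0..<g}. d l > 0}" unfolding pos_inertia_def using gen[of "\<lambda>a. a > 0"] by simp
  show "neg_inertia M = card {l\<in>{0..<g}. d l < 0}" unfolding neg_inertia_def using gen[of "\<lambda>a. a < 0"] by simp
qed


theorem mainTheorem4:
  fixes g :: nat and M :: "real mat" and c :: "complex vec"
  assumes "M \<in> carrier_mat g g"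
    and "transpose_mat M = M"
    and "has_signature M (g - 1) 1"
    and "c \<in> carrier_vec g"
    and "conjugate c \<bullet> (map_mat complex_of_real M *\<^sub>v c) \<in> \<real>"
    and "Re (conjugate c \<bullet> (map_mat complex_of_real M *\<^sub>v c)) < 0"
  shows "c \<bullet> (map_mat complex_of_real M *\<^sub>v c) \<noteq> 0 \<and>
    (let N = M + M * map_mat Re
           (inverse (- (1/2) * (c \<bullet> (map_mat complex_of_real M *\<^sub>v c)))
              \<cdot>\<^sub>m mat g g (\<lambda>(i, j). c $ i * c $ j)) * M
     in transpose_mat N = N \<and> pos_def_mat N)"
proof -
  have Mc: "M \<in> carrier_mat g g" and symM: "transpose_mat M = M" and c: "c \<in> carrier_vec g"
    using assms by auto
  obtain P d where P: "P \<in> carrier_mat g g" and PtP: "transpose_mat P * P = 1\<^sub>m g"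
    and PD: "transpose_mat P * M * P = mat g g (\<lambda>(i,j). if i = j then d i else 0)"
    using spectral[OF Mc symM] by blast
  define D where "D = mat g g (\<lambda>(i,j). if i = j then d i else (0::real))"
  have Dc: "D \<in> carrier_mat g g" unfolding D_def by simp
  have Pt: "transpose_mat P \<in> carrier_mat g g" using P by simp
  have PPt: "P * transpose_mat P = 1\<^sub>m g" using mat_mult_left_right_inverse[OF Pt P PtP] .
  have Mdec: "M = P * D * transpose_mat P"
  proof -
    have "P * transpose_mat P * M * (P * transpose_mat P) = P * (transpose_mat P * M * P) * transpose_mat P"
      using assoc5[OF P Pt Mc P Pt] .
    thus ?thesis unfolding PPt PD D_def[symmetric] using Mc by simp
  qed
  have PDe: "P * D = mat g g (\<lambda>(i,l). P $$ (i,l) * d l)"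
  proof (rule eq_matI)
    fix i l assume i: "i < dim_row (mat g g (\<lambda>(i,l). P $$ (i,l) * d l))"
      and l: "l < dim_col (mat g g (\<lambda>(i,l). P $$ (i,l) * d l))"
    have "(P * D) $$ (i,l) = (\<Sum>m\<in>{0..<g}. P $$ (i,m) * (if m = l then d m else 0))"
      using i l P unfolding D_def by (simp add: scalar_prod_def)
    also have "\<dots> = (\<Sum>m\<in>{0..<g}. if m = l then P $$ (i,m) * d m else 0)"
      by (intro sum.cong) auto
    also have "\<dots> = P $$ (i,l) * d l" using l by simp
    finally show "(P * D) $$ (i,l) = mat g g (\<lambda>(i,l). P $$ (i,l) * d l) $$ (i,l)" using i l by simp
  qed (use P Dc in auto)
  have Mij: "\<forall>i<g. \<forall>j<g. M $$ (i,j) = (\<Sum>l<g. P $$ (i,l) * d l * P $$ (j,l))"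
  proof (intro allI impI)
    fix i j assume i: "i < g" and j: "j < g"
    have "M $$ (i,j) = (mat g g (\<lambda>(i,l). P $$ (i,l) * d l) * transpose_mat P) $$ (i,j)"
      using Mdec PDe by simp
    also have "\<dots> = (\<Sum>l<g. P $$ (i,l) * d l * P $$ (j,l))"
      using i j P by (simp add: scalar_prod_def lessThan_atLeast0)
    finally show "M $$ (i,j) = (\<Sum>l<g. P $$ (i,l) * d l * P $$ (j,l))" .
  qed
  have orth: "\<forall>i<g. \<forall>j<g. (\<Sum>l<g. P $$ (i,l) * P $$ (j,l)) = (if i = j then 1 else 0)"
  proof (intro allI impI)
    fix i j assume i: "i < g" and j: "j < g"
    have "(\<Sum>l<g. P $$ (i,l) * P $$ (j,l)) = (P * transpose_mat P) $$ (i,j)"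
      using i j P by (simp add: scalar_prod_def lessThan_atLeast0)
    thus "(\<Sum>l<g. P $$ (i,l) * P $$ (j,l)) = (if i = j then 1 else 0)" unfolding PPt using i j by simp
  qed
  have sim: "similar_mat M D" unfolding similar_mat_def similar_mat_wit_def
    by (rule exI[of _ P], rule exI[of _ "transpose_mat P"]) (use Mc Dc P Pt PPt PtP Mdec in \<open>auto simp: Let_def\<close>)
  have ut: "upper_triangular D" unfolding upper_triangular_def D_def by auto
  have diagD: "diag_mat D = map d [0..<g]" unfolding diag_mat_def D_def by simp
  have cp: "char_poly M = (\<Prod>l\<in>{0..<g}. [:- d l, 1:])"
  proof -
    have "char_poly M = char_poly D" using char_poly_similar[OF sim] .
    also have "\<dots> = (\<Prod>a\<leftarrow>diag_mat D. [:- a, 1:])" using char_poly_upper_triangular[OF Dc ut] .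
    also have "\<dots> = (\<Prod>l\<in>{0..<g}. [:- d l, 1:])" unfolding diagD
      by (subst prod.distinct_set_conv_list[of "[0..<g]", simplified]) (simp_all add: comp_def)
    finally show ?thesis .
  qed
  have cpos: "card {l\<in>{0..<g}. d l > 0} = g - 1" and cneg: "card {l\<in>{0..<g}. d l < 0} = 1"
    using assms(3) inertia_count[OF cp] unfolding has_signature_def by auto
  obtain k where kset: "{l\<in>{0..<g}. d l < 0} = {k}" using card_1_singletonE[OF cneg] by blast
  have k: "k < g" "d k < 0" using kset by auto
  have others: "\<forall>i<g. i \<noteq> k \<longrightarrow> d i > 0"
  proof (intro allI impI)
    fix i assume i: "i < g" and ik: "i \<noteq> k"
    have "d i \<noteq> 0"
    proof
      assume di: "d i = 0"
      have "{l\<in>{0..<g}. d l > 0} \<union> {l\<in>{0..<g}. d l < 0} \<subseteq> {0..<g} - {i}" using di by auto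
      hence "card ({l\<in>{0..<g}. d l > 0} \<union> {l\<in>{0..<g}. d l < 0}) \<le> card ({0..<g} - {i})"
        by (intro card_mono) auto
      also have "\<dots> = g - 1" using i by simp
      also have "card ({l\<in>{0..<g}. d l > 0} \<union> {l\<in>{0..<g}. d l < 0}) = g - 1 + 1"
      proof -
        have disj: "{l\<in>{0..<g}. d l > 0} \<inter> {l\<in>{0..<g}. d l < 0} = {}" by auto
        show ?thesis using card_Un_disjoint[OF _ _ disj] cpos cneg by simp
      qed
      finally show False using k by simp
    qed
    moreover have "\<not> d i < 0" using kset i ik by auto
    ultimately show "d i > 0" by simp
  qed
  define Z where "Z = (\<lambda>l. \<Sum>i<g. c $ i * of_real (P $$ (i,l)))"
  define lam where "lam = c \<bullet> (map_mat complex_of_real M *\<^sub>v c)"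
  have lamZ: "lam = (\<Sum>l<g. of_real (d l) * (Z l)^2)"
    unfolding lam_def Z_def using form_diag[OF Mc Mij c c] by (simp add: power2_eq_square mult.assoc)
  have cc: "conjugate c \<in> carrier_vec g" using c by simp
  have negZ: "(\<Sum>l<g. d l * (cmod (Z l))^2) < 0"
  proof -
    have "conjugate c \<bullet> (map_mat complex_of_real M *\<^sub>v c) =
        (\<Sum>l<g. of_real (d l) * (\<Sum>i<g. conjugate c $ i * of_real (P $$ (i,l))) * Z l)"
      using form_diag[OF Mc Mij cc c] unfolding Z_def .
    also have "\<dots> = (\<Sum>l<g. of_real (d l * (cmod (Z l))^2))"
    proof (intro sum.cong refl)
      fix l assume l: "l \<in> {..<g}"
      have "(\<Sum>i<g. conjugate c $ i * of_real (P $$ (i,l))) = cnj (Z l)"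
        unfolding Z_def using c by (simp add: cnj_sum)
      moreover have "cnj (Z l) * Z l = of_real ((cmod (Z l))^2)"
        by (metis complex_norm_square mult.commute)
      ultimately show "of_real (d l) * (\<Sum>i<g. conjugate c $ i * of_real (P $$ (i,l))) * Z l = of_real (d l * (cmod (Z l))^2)"
        by (simp add: mult.assoc)
    qed
    finally have "Re (conjugate c \<bullet> (map_mat complex_of_real M *\<^sub>v c)) = (\<Sum>l<g. d l * (cmod (Z l))^2)"
      by (simp add: Re_sum)
    thus ?thesis using assms(6) by simp
  qed
  have lam0: "lam \<noteq> 0" using complex_core(1)[OF k others negZ] lamZ by simp
  define k0 where "k0 = inverse (- (1/2) * lam)"
  have k0: "k0 = -2 / lam" unfolding k0_def using lam0 by (simp add: field_simps)
  define R where "R = map_mat Re (k0 \<cdot>\<^sub>m mat g g (\<lambda>(i, j). c $ i * c $ j))"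
  have Rc: "R \<in> carrier_mat g g" unfolding R_def by simp
  have Rij: "\<And>i j. i < g \<Longrightarrow> j < g \<Longrightarrow> R $$ (i,j) = Re (k0 * (c $ i * c $ j))"
    unfolding R_def by simp
  have symR: "transpose_mat R = R"
    by (rule eq_matI) (use Rc Rij in \<open>auto simp: mult.commute\<close>)
  define N where "N = M + M * R * M"
  have Nc: "N \<in> carrier_mat g g" unfolding N_def using Mc Rc by simp
  have symN: "transpose_mat N = N"
  proof -
    have MRM: "M * R * M \<in> carrier_mat g g" using Mc Rc by simp
    have "transpose_mat (M * R * M) = transpose_mat M * transpose_mat (M * R)"
      using transpose_mult[of "M * R" g g M g] Mc Rc by simp
    also have "transpose_mat (M * R) = transpose_mat R * transpose_mat M"
      using transpose_mult[of M g g R g] Mc Rc by simp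
    finally have "transpose_mat (M * R * M) = M * (R * M)" unfolding symR symM .
    also have "\<dots> = M * R * M" using Mc Rc by simp
    finally have t: "transpose_mat (M * R * M) = M * R * M" .
    show ?thesis unfolding N_def using transpose_add[OF Mc MRM] t symM by simp
  qed
  have quad: "v \<bullet> (N *\<^sub>v v) > 0" if v: "v \<in> carrier_vec g" and v0: "v \<noteq> 0\<^sub>v g" for v
  proof -
    define w where "w = M *\<^sub>v v"
    have w: "w \<in> carrier_vec g" unfolding w_def using Mc v by simp
    have Rw: "R *\<^sub>v w \<in> carrier_vec g" using Rc w by simp
    have "N *\<^sub>v v = M *\<^sub>v v + (M * R * M) *\<^sub>v v"
      unfolding N_def using add_mult_distrib_mat_vec[of M g g "M * R * M" v] Mc Rc v by simp
    also have "(M * R * M) *\<^sub>v v = M *\<^sub>v (R *\<^sub>v w)"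
    proof -
      have "(M * R * M) *\<^sub>v v = (M * R) *\<^sub>v (M *\<^sub>v v)"
        using assoc_mult_mat_vec[of "M * R" g g M g v] Mc Rc v by simp
      also have "\<dots> = M *\<^sub>v (R *\<^sub>v (M *\<^sub>v v))"
        using assoc_mult_mat_vec[of M g g R g "M *\<^sub>v v"] Mc Rc v by simp
      finally show ?thesis unfolding w_def .
    qed
    finally have Nv: "N *\<^sub>v v = M *\<^sub>v v + M *\<^sub>v (R *\<^sub>v w)" .
    have "v \<bullet> (N *\<^sub>v v) = v \<bullet> (M *\<^sub>v v) + v \<bullet> (M *\<^sub>v (R *\<^sub>v w))"
      unfolding Nv using scalar_prod_add_distrib[of v g "M *\<^sub>v v" "M *\<^sub>v (R *\<^sub>v w)"] v Mc Rw by simp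
    also have "v \<bullet> (M *\<^sub>v (R *\<^sub>v w)) = w \<bullet> (R *\<^sub>v w)"
      using transpose_vec_mult_scalar[OF Mc Rw v] symM unfolding w_def by simp
    finally have vNv: "v \<bullet> (N *\<^sub>v v) = v \<bullet> (M *\<^sub>v v) + w \<bullet> (R *\<^sub>v w)" .
    define s where "s = (\<Sum>i<g. c $ i * of_real (w $ i))"
    have wRw: "w \<bullet> (R *\<^sub>v w) = Re (k0 * s^2)"
    proof -
      have "w \<bullet> (R *\<^sub>v w) = (\<Sum>i<g. \<Sum>j<g. w $ i * (Re (k0 * (c $ i * c $ j)) * w $ j))"
        using w Rc Rij by (auto simp: scalar_prod_def lessThan_atLeast0 sum_distrib_left intro!: sum.cong)
      also have "\<dots> = (\<Sum>i<g. \<Sum>j<g. Re (of_real (w $ i * w $ j) * (k0 * (c $ i * c $ j))))"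
        by (intro sum.cong refl) (simp add: algebra_simps)
      also have "\<dots> = Re (\<Sum>i<g. \<Sum>j<g. of_real (w $ i * w $ j) * (k0 * (c $ i * c $ j)))"
        by (simp add: Re_sum)
      also have "(\<Sum>i<g. \<Sum>j<g. of_real (w $ i * w $ j) * (k0 * (c $ i * c $ j))) = k0 * s^2"
      proof -
        have "s^2 = (\<Sum>i<g. \<Sum>j<g. (c $ i * of_real (w $ i)) * (c $ j * of_real (w $ j)))"
          unfolding s_def power2_eq_square by (rule sum_product)
        hence "k0 * s^2 = (\<Sum>i<g. \<Sum>j<g. k0 * ((c $ i * of_real (w $ i)) * (c $ j * of_real (w $ j))))"
          by (simp add: sum_distrib_left)
        thus ?thesis by (simp add: algebra_simps)
      qed
      finally show ?thesis .
    qed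
    define V where "V = (\<lambda>l. \<Sum>j<g. v $ j * P $$ (j,l))"
    have vc: "map_vec complex_of_real v \<in> carrier_vec g" using v by simp
    have sV: "s = (\<Sum>l<g. of_real (d l) * Z l * of_real (V l))"
    proof -
      have "s = c \<bullet> map_vec complex_of_real w"
        unfolding s_def scalar_prod_def using w by (simp add: lessThan_atLeast0)
      also have "map_vec complex_of_real w = map_mat complex_of_real M *\<^sub>v map_vec complex_of_real v"
        unfolding w_def using of_real_hom.mult_mat_vec_hom[OF Mc v] .
      also have "c \<bullet> \<dots> = (\<Sum>l<g. of_real (d l) * Z l * (\<Sum>j<g. map_vec complex_of_real v $ j * of_real (P $$ (j,l))))"
        using form_diag[OF Mc Mij c vc] unfolding Z_def .
      also have "\<dots> = (\<Sum>l<g. of_real (d l) * Z l * of_real (V l))"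
        unfolding V_def using v by (simp add: of_real_sum)
      finally show ?thesis .
    qed
    have vMv: "v \<bullet> (M *\<^sub>v v) = bf g d V V"
    proof -
      have "map_mat (of_real :: real \<Rightarrow> real) M = M" by (rule eq_matI) auto
      hence "v \<bullet> (M *\<^sub>v v) = v \<bullet> (map_mat of_real M *\<^sub>v v)" by simp
      also have "\<dots> = bf g d V V" using form_diag[OF Mc Mij v v] unfolding bf_def V_def by simp
      finally show ?thesis .
    qed
    have Vnz: "\<exists>l<g. V l \<noteq> 0"
    proof (rule ccontr)
      assume "\<not> (\<exists>l<g. V l \<noteq> 0)"
      hence V0: "\<forall>l<g. V l = 0" by simp
      have "v = 0\<^sub>v g"
      proof (rule eq_vecI)
        fix i assume "i < dim_vec (0\<^sub>v g :: real vec)"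
        hence i: "i < g" by simp
        have "v $ i = (\<Sum>j<g. v $ j * (if i = j then 1 else 0))" using i by (simp add: if_distrib cong: if_cong)
        also have "\<dots> = (\<Sum>j<g. v $ j * (\<Sum>l<g. P $$ (i,l) * P $$ (j,l)))"
          using orth i by (intro sum.cong refl) simp
        also have "\<dots> = (\<Sum>l<g. P $$ (i,l) * V l)"
          unfolding V_def sum_distrib_left by (subst sum.swap) (simp add: algebra_simps)
        also have "\<dots> = 0" using V0 by simp
        finally show "v $ i = 0\<^sub>v g $ i" using i by simp
      qed (use v in simp)
      thus False using v0 by simp
    qed
    have "bf g d V V + Re (-2 / (\<Sum>l<g. of_real (d l) * (Z l)^2) * (\<Sum>l<g. of_real (d l) * Z l * of_real (V l))^2) > 0"
      using complex_core(2)[OF k others negZ Vnz] .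
    thus ?thesis unfolding vNv wRw vMv k0 sV lamZ .
  qed
  have pd: "pos_def_mat N" unfolding pos_def_mat_def using Nc quad by auto
  show ?thesis using lam0 symN pd unfolding lam_def Let_def N_def R_def k0_def by simp
qed

end
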